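(* Assume $\eta$ is supported on $\{\mathbf{x}\in E:|\mathbf{x}|_\infty\le R\}$ for some $R>0$. Let $\rho$ be a Borel probability distribution on $\mathsf{X}$ such that $f_i$ is $\rho$-integrable for every $i\in[n+1]$, and let $X$ be the process constructed from $\rho$ as in the context. Then for every $i\in[n+1]$ and every $t\ge0$, $\mathbb{E}(f_i(X_t))$ is well-defined and finite.
   Context: Fix $\theta_a,\theta_d>0$, positive integers $n,N$, $E=\mathbb{R}^N$ with the $\infty$-norm $|\cdot|_\infty$, and a Borel probability measure $\eta$ on $E$ with finite mean. $[k]=\{0,\dots,k-1\}$; $|\psi|=\sum_{i\in[n]}\psi(i)$. State space: $\mathsf{X}=\{(\psi,\mathbf{v})\in\{0,1\}^{[n]}\times E^{[n+1]}:\sum_{i\in[n]}\psi(i)(\mathbf{v}(i)-\mathbf{v}(n))=0\}$ (subspace of the product topology, discrete on $\{0,1\}$, Euclidean on $E$). $f_i(\psi,\mathbf{v})=\mathbf{v}(i)$ for $i\in[n+1]$. For $i\in[n]$: $r_i(\psi)=\frac{\theta_d\psi(i)+\theta_a(1-\psi(i))}{\theta_d|\psi|+\theta_a(n-|\psi|)}$; $s_i(\psi)$ agrees with $\psi$ except $s_i(\psi)(i)=1-\psi(i)$. For $\mathsf{x}=(\psi,\mathbf{v})\in\mathsf{X}$, $\lambda_i^{\mathsf{x}}$ is the law of $(s_i(\psi),\mathbf{w})$ with $\mathbf{w}(j)=\mathbf{v}(j)$ for $j\in[n]\setminus\{i\}$ and $(\mathbf{w}(i),\mathbf{w}(n))$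 equal to $(\mathbf{v}(i),\mathbf{v}(n))$ if $|\psi|=\psi(i)=1$; $(\mathbf{v}(i),\mathbf{v}(n)-\frac{\mathbf{v}(i)-\mathbf{v}(n)}{|\psi|-1})$ if $|\psi|>\psi(i)=1$; $(\mathbf{x}+\mathbf{v}(n),\frac{\mathbf{x}}{|\psi|+1}+\mathbf{v}(n))$ with $\mathbf{x}\sim\eta$ if $\psi(i)=0$. $\mu(\mathsf{x},B)=\sum_{i\in[n]}r_i(\psi)\lambda_i^{\mathsf{x}}(B)$; $c(\psi,\mathbf{v})=\theta_d|\psi|+\theta_a(n-|\psi|)$. Construction of $X$ from $\rho$: $Y$ is a discrete-time Markov chain on $\mathsf{X}$ with transition kernel $\mu$ and $Y_0\sim\rho$; $(\gamma_k)_{k\ge1}$ i.i.d. standard exponential with $\{Y,\gamma_1,\gamma_2,\dots\}$ independent; $\tau_0=0$, $\tau_k=\sum_{i=1}^k\gamma_i/c(Y_{i-1})$; $X_t=Y_k$ for $t\in[\tau_k,\tau_{k+1})$. *)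

theory Defs
  imports "HOL-Probability.Probability"
begin

type_synonym 'N state = "(nat \<Rightarrow> bool) \<times> (nat \<Rightarrow> real ^ 'N)"

text \<open>|psi| = number of indices i < n with psi(i) = 1 (psi(i) = 1 is encoded as psi i = True).\<close>
definition psiCard :: "nat \<Rightarrow> (nat \<Rightarrow> bool) \<Rightarrow> nat" where
  "psiCard n \<psi> = card {i. i < n \<and> \<psi> i}"

definition Xset :: "nat \<Rightarrow> ('N::finite) state set" where
  "Xset n = {(\<psi>, v). \<psi> \<in> {..<n} \<rightarrow>\<^sub>E (UNIV :: bool set) \<and> v \<in> {..<Suc n} \<rightarrow>\<^sub>E (UNIV :: (real ^ 'N) set)
      \<and> (\<Sum>i<n. (if \<psi> i then 1 else 0) *\<^sub>R (v i - v n)) = 0}"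

text \<open>Borel sigma-algebra of the product topology (discrete on {0,1}, Euclidean on E), restricted to X.\<close>
definition SX :: "nat \<Rightarrow> ('N::finite) state measure" where
  "SX n = restrict_space
      (PiM {..<n} (\<lambda>_. count_space (UNIV :: bool set)) \<Otimes>\<^sub>M PiM {..<Suc n} (\<lambda>_. (borel :: (real ^ 'N) measure)))
      (Xset n)"

definition crate :: "real \<Rightarrow> real \<Rightarrow> nat \<Rightarrow> ('N::finite) state \<Rightarrow> real" where
  "crate \<theta>a \<theta>d n x = \<theta>d * real (psiCard n (fst x)) + \<theta>a * (real n - real (psiCard n (fst x)))"

definition rrate :: "real \<Rightarrow> real \<Rightarrow> nat \<Rightarrow> nat \<Rightarrow> (nat \<Rightarrow> bool) \<Rightarrow> real" where
  "rrate \<theta>a \<theta>d n i \<psi> =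
     (\<theta>d * (if \<psi> i then 1 else 0) + \<theta>a * (if \<psi> i then 0 else 1))
     / (\<theta>d * real (psiCard n \<psi>) + \<theta>a * (real n - real (psiCard n \<psi>)))"

definition sflip :: "nat \<Rightarrow> (nat \<Rightarrow> bool) \<Rightarrow> (nat \<Rightarrow> bool)" where
  "sflip i \<psi> = \<psi>(i := \<not> \<psi> i)"

definition wvec :: "nat \<Rightarrow> nat \<Rightarrow> (nat \<Rightarrow> real ^ 'N) \<Rightarrow> real ^ 'N \<Rightarrow> real ^ 'N \<Rightarrow> (nat \<Rightarrow> real ^ 'N)" where
  "wvec n i v a b = (\<lambda>j. if j = i then a else if j = n then b else if j < Suc n then v j else undefined)"

text \<open>lambda_i^x(B) (for the deterministic cases the law is a Dirac mass,
  for psi(i)=0 it is the image of eta).\<close>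
definition lamK :: "nat \<Rightarrow> (real ^ 'N) measure \<Rightarrow> ('N::finite) state \<Rightarrow> nat \<Rightarrow> ('N::finite) state set \<Rightarrow> real" where
  "lamK n \<eta> x i B =
     (let \<psi> = fst x; v = snd x; k = psiCard n \<psi> in
      if \<psi> i then
        (if k = 1 then indicator B (sflip i \<psi>, wvec n i v (v i) (v n))
         else indicator B (sflip i \<psi>, wvec n i v (v i) (v n - inverse (real k - 1) *\<^sub>R (v i - v n))))
      else measure \<eta> ((\<lambda>y. (sflip i \<psi>, wvec n i v (y + v n) (inverse (real k + 1) *\<^sub>R y + v n))) -` B
                       \<inter> space \<eta>))"

definition muK :: "real \<Rightarrow> real \<Rightarrow> nat \<Rightarrow> (real ^ 'N) measure \<Rightarrow> ('N::finite) state \<Rightarrow> ('N::finite) state set \<Rightarrow> real" where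
  "muK \<theta>a \<theta>d n \<eta> x B = (\<Sum>i<n. rrate \<theta>a \<theta>d n i (fst x) * lamK n \<eta> x i B)"

text \<open>Y is a discrete-time Markov chain on (X, SX) with kernel mu and Y_0 ~ rho
  (characterised through its finite-dimensional distributions).\<close>
definition markov_chain ::
  "'w measure \<Rightarrow> ('N::finite) state measure \<Rightarrow> (('N::finite) state \<Rightarrow> ('N::finite) state set \<Rightarrow> real) \<Rightarrow> ('N::finite) state measure
     \<Rightarrow> (nat \<Rightarrow> 'w \<Rightarrow> ('N::finite) state) \<Rightarrow> bool" where
  "markov_chain M S K \<rho> Y \<longleftrightarrow>
     (\<forall>k. Y k \<in> measurable M S) \<and> distr M S (Y 0) = \<rho> \<and>
     (\<forall>k A. (\<forall>j. A j \<in> sets S) \<longrightarrow>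
        emeasure M {\<omega> \<in> space M. \<forall>j\<le>Suc k. Y j \<omega> \<in> A j}
        = (\<integral>\<^sup>+ \<omega>. indicator {\<omega> \<in> space M. \<forall>j\<le>k. Y j \<omega> \<in> A j} \<omega> * ennreal (K (Y k \<omega>) (A (Suc k))) \<partial>M))"

text \<open>Jump times: tau_k = sum_{i<k} gamma_i / c(Y_i) (gamma 0 plays the role of gamma_1).\<close>
definition jump_time :: "(nat \<Rightarrow> 'w \<Rightarrow> real) \<Rightarrow> (('N::finite) state \<Rightarrow> real) \<Rightarrow> (nat \<Rightarrow> 'w \<Rightarrow> ('N::finite) state) \<Rightarrow> nat \<Rightarrow> 'w \<Rightarrow> real" where
  "jump_time \<gamma> c Y k \<omega> = (\<Sum>i<k. \<gamma> i \<omega> / c (Y i \<omega>))"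

text \<open>X_t = Y_k for t in [tau_k, tau_(k+1)).\<close>
definition jump_process :: "(nat \<Rightarrow> 'w \<Rightarrow> real) \<Rightarrow> (('N::finite) state \<Rightarrow> real) \<Rightarrow> (nat \<Rightarrow> 'w \<Rightarrow> ('N::finite) state) \<Rightarrow> real \<Rightarrow> 'w \<Rightarrow> ('N::finite) state" where
  "jump_process \<gamma> c Y t \<omega> = Y (LEAST k. t < jump_time \<gamma> c Y (Suc k) \<omega>) \<omega>"

end

theory Submission
  imports Defs
begin

lemma psiCard_le: "psiCard n \<psi> \<le> n"
  unfolding psiCard_def by (metis (no_types, lifting) card_lessThan card_mono finite_lessThan lessThan_iff mem_Collect_eq subsetI)

lemma removal_bound:
  fixes v :: "nat \<Rightarrow> real ^ 'N::finite"
  assumes c: "(\<Sum>j<n. (if \<psi> j then 1 else 0) *\<^sub>R (v j - v n)) = 0" and i: "i < n" "\<psi> i"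
    and k1: "psiCard n \<psi> \<noteq> 1" and b: "\<forall>j\<le>n. norm (v j) \<le> b"
  shows "norm (v n - inverse (real (psiCard n \<psi>) - 1) *\<^sub>R (v i - v n)) \<le> b"
proof -
  define A where "A = {j. j < n \<and> \<psi> j}"
  have fA: "finite A" unfolding A_def by simp
  have iA: "i \<in> A" using i unfolding A_def by simp
  define k where "k = card A"
  have kdef: "psiCard n \<psi> = k" unfolding k_def A_def psiCard_def ..
  have k2: "k \<ge> 2" using k1 fA iA unfolding kdef k_def
    by (metis One_nat_def card_0_eq emptyE less_2_cases not_le)
  have "(\<Sum>j<n. (if \<psi> j then 1 else 0) *\<^sub>R (v j - v n)) = (\<Sum>j\<in>A. v j - v n)"
  proof -
    have "(\<Sum>j<n. (if \<psi> j then 1 else 0) *\<^sub>R (v j - v n)) = (\<Sum>j<n. if \<psi> j then v j - v n else 0)"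
      by (intro sum.cong) auto
    also have "\<dots> = (\<Sum>j\<in>{j\<in>{..<n}. \<psi> j}. v j - v n)"
      using sum.inter_filter[of "{..<n}" "\<lambda>j. v j - v n" "\<psi>"] by simp
    also have "{j\<in>{..<n}. \<psi> j} = A" unfolding A_def by auto
    finally show ?thesis .
  qed
  then have "(\<Sum>j\<in>A. v j) = real k *\<^sub>R v n" using c
    by (simp add: sum_subtractf k_def sum_constant_scaleR del: sum_constant)
  then have s: "(\<Sum>j\<in>A-{i}. v j) = real k *\<^sub>R v n - v i"
    using sum_diff1[OF fA, of v] iA by simp
  have kk: "real k - 1 > 0" using k2 by simp
  have "v n - inverse (real k - 1) *\<^sub>R (v i - v n) = inverse (real k - 1) *\<^sub>R (\<Sum>j\<in>A-{i}. v j)"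
  proof -
    have e: "inverse (real k - 1) * real k = 1 + inverse (real k - 1)" using kk by (simp add: field_simps)
    have "inverse (real k - 1) *\<^sub>R (real k *\<^sub>R v n - v i)
        = (inverse (real k - 1) * real k) *\<^sub>R v n - inverse (real k - 1) *\<^sub>R v i"
      by (simp add: scaleR_diff_right)
    also have "\<dots> = v n - inverse (real k - 1) *\<^sub>R (v i - v n)"
      unfolding e by (simp add: scaleR_add_left scaleR_diff_right)
    finally show ?thesis unfolding s by simp
  qed
  also have "norm \<dots> \<le> inverse (real k - 1) * (\<Sum>j\<in>A-{i}. norm (v j))"
    using kk by (simp add: norm_sum)
  also have "\<dots> \<le> inverse (real k - 1) * (\<Sum>j\<in>A-{i}. b)"
    using kk b unfolding A_def by (intro mult_left_mono sum_mono) auto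
  also have "\<dots> = b" using kk fA iA by (simp add: k_def)
  finally show ?thesis unfolding kdef .
qed

lemma wvec_bound:
  assumes "i < n" "norm a \<le> c" "norm d \<le> c" "\<forall>j\<le>n. norm (v j) \<le> c"
  shows "\<forall>j\<le>n. norm (wvec n i v a d j) \<le> c"
  using assms unfolding wvec_def by auto

lemma lamK_zero:
  fixes \<eta> :: "(real ^ 'N::finite) measure" and x :: "'N state"
  assumes x: "x \<in> Xset n" and i: "i < n" and b: "\<forall>j\<le>n. norm (snd x j) \<le> b" and C: "0 \<le> C"
    and ae: "AE y in \<eta>. norm y \<le> C"
    and B: "B \<subseteq> {y. \<exists>j\<le>n. b + C < norm (snd y j)}"
  shows "lamK n \<eta> x i B = 0"
proof -
  obtain \<psi> v where xe: "x = (\<psi>, v)" by (cases x)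
  have c: "(\<Sum>j<n. (if \<psi> j then 1 else 0) *\<^sub>R (v j - v n)) = 0"
    using x unfolding xe Xset_def by auto
  have vb: "\<forall>j\<le>n. norm (v j) \<le> b" using b xe by simp
  have vbC: "\<forall>j\<le>n. norm (v j) \<le> b + C" using vb C by force
  show ?thesis
  proof (cases "\<psi> i")
    case True
    show ?thesis
    proof (cases "psiCard n \<psi> = 1")
      case True
      have "\<forall>j\<le>n. norm (wvec n i v (v i) (v n) j) \<le> b + C"
        using i vbC by (intro wvec_bound) auto
      then have "(sflip i \<psi>, wvec n i v (v i) (v n)) \<notin> B" using B by force
      then show ?thesis using True \<open>\<psi> i\<close> unfolding lamK_def xe Let_def by simp
    next
      case False
      have r: "norm (v n - inverse (real (psiCard n \<psi>) - 1) *\<^sub>R (v i - v n)) \<le> b"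
        using removal_bound[OF c i \<open>\<psi> i\<close> False vb] .
      have "\<forall>j\<le>n. norm (wvec n i v (v i) (v n - inverse (real (psiCard n \<psi>) - 1) *\<^sub>R (v i - v n)) j) \<le> b + C"
        using i vbC r C by (intro wvec_bound) auto
      then have "(sflip i \<psi>, wvec n i v (v i) (v n - inverse (real (psiCard n \<psi>) - 1) *\<^sub>R (v i - v n))) \<notin> B"
        using B by force
      then show ?thesis using False \<open>\<psi> i\<close> unfolding lamK_def xe Let_def by simp
    qed
  next
    case False
    define k where "k = psiCard n \<psi>"
    define f where "f = (\<lambda>y. (sflip i \<psi>, wvec n i v (y + v n) (inverse (real k + 1) *\<^sub>R y + v n)))"
    have sub: "f -` B \<inter> space \<eta> \<subseteq> {y \<in> space \<eta>. \<not> norm y \<le> C}"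
    proof (rule subsetI, rule ccontr)
      fix y assume y0: "y \<in> f -` B \<inter> space \<eta>" "y \<notin> {y \<in> space \<eta>. \<not> norm y \<le> C}"
      then have y: "f y \<in> B" "y \<in> space \<eta>" "norm y \<le> C" by auto
      have n1: "norm (y + v n) \<le> b + C" using y(3) vb norm_triangle_ineq[of y "v n"] by force
      have "norm (inverse (real k + 1) *\<^sub>R y) \<le> norm y"
        by (simp add: field_simps)
      then have n2: "norm (inverse (real k + 1) *\<^sub>R y + v n) \<le> b + C"
        using y(3) vb norm_triangle_ineq[of "inverse (real k + 1) *\<^sub>R y" "v n"] by force
      have "\<forall>j\<le>n. norm (wvec n i v (y + v n) (inverse (real k + 1) *\<^sub>R y + v n) j) \<le> b + C"
        using i vbC n1 n2 by (intro wvec_bound) auto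
      then show False using y(1) B unfolding f_def by force
    qed
    obtain N where N: "N \<in> null_sets \<eta>" "{y \<in> space \<eta>. \<not> norm y \<le> C} \<subseteq> N"
      using ae by (auto elim!: AE_E)
    have "measure \<eta> (f -` B \<inter> space \<eta>) = 0"
    proof (cases "f -` B \<inter> space \<eta> \<in> sets \<eta>")
      case True
      then have "f -` B \<inter> space \<eta> \<in> null_sets \<eta>"
        using null_sets_subset[OF N(1) True] sub N(2) by blast
      then show ?thesis by (simp add: measure_eq_0_null_sets)
    qed (simp add: measure_notin_sets)
    then show ?thesis using False unfolding lamK_def xe Let_def f_def k_def by simp
  qed
qed

lemma muK_zero:
  fixes \<eta> :: "(real ^ 'N::finite) measure" and x :: "'N state"
  assumes x: "x \<in> Xset n" and b: "\<forall>j\<le>n. norm (snd x j) \<le> b" and C: "0 \<le> C"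
    and ae: "AE y in \<eta>. norm y \<le> C"
    and B: "B \<subseteq> {y. \<exists>j\<le>n. b + C < norm (snd y j)}"
  shows "muK \<theta>a \<theta>d n \<eta> x B = 0"
  unfolding muK_def using lamK_zero[OF x _ b C ae B] by simp

lemma space_SX: "space (SX n) = Xset n"
  unfolding SX_def space_restrict_space Xset_def
  by (auto simp: space_pair_measure space_PiM)

lemma meas_snd: "i \<le> n \<Longrightarrow> (\<lambda>x. snd x i) \<in> borel_measurable (SX n)"
  unfolding SX_def
  by (intro measurable_restrict_space1 measurable_compose[OF measurable_snd] measurable_component_singleton) auto

lemma meas_fst: "i < n \<Longrightarrow> (\<lambda>x. fst x i) \<in> measurable (SX n) (count_space UNIV)"
  unfolding SX_def
  by (intro measurable_restrict_space1 measurable_compose[OF measurable_fst] measurable_component_singleton) auto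

lemma psiCard_sum: "real (psiCard n \<psi>) = (\<Sum>i<n. if \<psi> i then 1 else 0)"
proof -
  have "(\<Sum>i<n. if \<psi> i then 1 else 0 :: real) = (\<Sum>i\<in>{i\<in>{..<n}. \<psi> i}. 1)"
    using sum.inter_filter[of "{..<n}" "\<lambda>_. 1::real" "\<psi>"] by simp
  also have "\<dots> = real (card {i. i < n \<and> \<psi> i})" by simp
  finally show ?thesis unfolding psiCard_def by simp
qed

lemma meas_psiCard: "(\<lambda>x. real (psiCard n (fst x))) \<in> borel_measurable (SX n)"
proof -
  have "(\<lambda>x. \<Sum>i<n. if fst x i then 1 else 0 :: real) \<in> borel_measurable (SX n)"
  proof (intro borel_measurable_sum)
    fix i assume "i \<in> {..<n}"
    then have [measurable]: "(\<lambda>x. fst x i) \<in> measurable (SX n) (count_space UNIV)" by (simp add: meas_fst)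
    show "(\<lambda>x. if fst x i then 1 else 0 :: real) \<in> borel_measurable (SX n)" by measurable
  qed
  then show ?thesis unfolding psiCard_sum .
qed

lemma meas_crate: "crate \<theta>a \<theta>d n \<in> borel_measurable (SX n)"
  unfolding crate_def[abs_def]
  by (intro borel_measurable_add borel_measurable_times borel_measurable_diff borel_measurable_const meas_psiCard)

lemma pred_bound: "Measurable.pred (SX n) (\<lambda>x. \<forall>j\<le>n. norm (snd x j) \<le> b)"
proof -
  have "Measurable.pred (SX n) (\<lambda>x. \<forall>j\<in>{..n}. norm (snd x j) \<le> b)"
  proof (intro pred_intros_finite)
    show "finite {..n}" by simp
    fix j assume "j \<in> {..n}"
    then have [measurable]: "(\<lambda>x. snd x j) \<in> borel_measurable (SX n)" by (simp add: meas_snd)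
    have "(\<lambda>x. norm (snd x j)) \<in> borel_measurable (SX n)" by measurable
    then show "Measurable.pred (SX n) (\<lambda>x. norm (snd x j) \<le> b)" by measurable
  qed
  then show ?thesis unfolding Ball_def atMost_iff .
qed

lemma pred_bound_sets: "{x \<in> space (SX n). \<forall>j\<le>n. norm (snd x j) \<le> b} \<in> sets (SX n)"
  using pred_bound by (rule predE)

lemma pred_bound_sets': "{x \<in> space (SX n). \<not> (\<forall>j\<le>n. norm (snd x j) \<le> b)} \<in> sets (SX n)"
  using pred_bound by (intro predE pred_intros_logic)

lemma markov_step_AE:
  fixes Y :: "nat \<Rightarrow> 'w \<Rightarrow> ('N::finite) state" and \<eta> :: "(real ^ 'N) measure"
  assumes mc: "markov_chain M (SX n) (muK \<theta>a \<theta>d n \<eta>) \<rho> Y"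
    and C: "0 \<le> C" and ae: "AE y in \<eta>. norm y \<le> C"
  shows "AE \<omega> in M. (\<forall>j\<le>n. norm (snd (Y k \<omega>) j) \<le> b) \<longrightarrow> (\<forall>j\<le>n. norm (snd (Y (Suc k) \<omega>) j) \<le> b + C)"
proof -
  define S where "S = (SX n :: 'N state measure)"
  define P where "P = (\<lambda>c (x::'N state). \<forall>j\<le>n. norm (snd x j) \<le> c)"
  define A where "A = (\<lambda>j. if j = k then {x\<in>space S. P b x} else if j = Suc k then {x\<in>space S. \<not> P (b+C) x} else space S)"
  have Ym: "\<And>j. Y j \<in> measurable M S" using mc unfolding markov_chain_def S_def by auto
  have As: "\<And>j. A j \<in> sets S"
    proof -
    fix j
    have 1: "{x\<in>space S. P b x} \<in> sets S" unfolding S_def P_def by (rule pred_bound_sets)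
    have 2: "{x\<in>space S. \<not> P (b+C) x} \<in> sets S" unfolding S_def P_def by (rule pred_bound_sets')
    show "A j \<in> sets S" unfolding A_def using 1 2 sets.top[of S] by (cases "j = k"; cases "j = Suc k") auto
  qed
  have eq: "emeasure M {\<omega> \<in> space M. \<forall>j\<le>Suc k. Y j \<omega> \<in> A j}
        = (\<integral>\<^sup>+ \<omega>. indicator {\<omega> \<in> space M. \<forall>j\<le>k. Y j \<omega> \<in> A j} \<omega> * ennreal (muK \<theta>a \<theta>d n \<eta> (Y k \<omega>) (A (Suc k))) \<partial>M)"
    proof -
    have mc3: "\<forall>k A. (\<forall>j. A j \<in> sets S) \<longrightarrow>
        emeasure M {\<omega> \<in> space M. \<forall>j\<le>Suc k. Y j \<omega> \<in> A j}
        = (\<integral>\<^sup>+ \<omega>. indicator {\<omega> \<in> space M. \<forall>j\<le>k. Y j \<omega> \<in> A j} \<omega> * ennreal (muK \<theta>a \<theta>d n \<eta> (Y k \<omega>) (A (Suc k))) \<partial>M)"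
      using mc unfolding markov_chain_def S_def by (elim conjE)
    have "\<forall>j. A j \<in> sets S" using As by blast
    then show ?thesis by (rule mp[OF spec[OF spec[OF mc3, of k], of A]])
  qed
  also have "\<dots> = (\<integral>\<^sup>+ \<omega>. 0 \<partial>M)"
      proof (intro nn_integral_cong)
    fix \<omega> assume "\<omega> \<in> space M"
    show "indicator {\<omega> \<in> space M. \<forall>j\<le>k. Y j \<omega> \<in> A j} \<omega> * ennreal (muK \<theta>a \<theta>d n \<eta> (Y k \<omega>) (A (Suc k))) = 0"
    proof (cases "\<forall>j\<le>k. Y j \<omega> \<in> A j")
      case True
      then have "Y k \<omega> \<in> A k" by simp
      then have yk: "Y k \<omega> \<in> Xset n" "P b (Y k \<omega>)" unfolding A_def S_def space_SX by auto
      have "A (Suc k) \<subseteq> {y. \<exists>j\<le>n. b + C < norm (snd y j)}"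
        unfolding A_def P_def by (auto simp: not_le)
      then have "muK \<theta>a \<theta>d n \<eta> (Y k \<omega>) (A (Suc k)) = 0"
        using muK_zero[OF yk(1) _ C ae] yk(2) unfolding P_def by blast
      then show ?thesis by simp
    qed simp
  qed
  finally have z: "emeasure M {\<omega> \<in> space M. \<forall>j\<le>Suc k. Y j \<omega> \<in> A j} = 0" by simp
  have "{\<omega> \<in> space M. \<forall>j\<le>Suc k. Y j \<omega> \<in> A j} = (\<Inter>j\<in>{..Suc k}. Y j -` A j \<inter> space M)"
    by blast
  also have "\<dots> \<in> sets M"
    by (intro sets.finite_INT measurable_sets[OF Ym As]) auto
  finally have "{\<omega> \<in> space M. \<forall>j\<le>Suc k. Y j \<omega> \<in> A j} \<in> null_sets M" using z by (blast intro: null_setsI)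
  then have "AE \<omega> in M. P b (Y k \<omega>) \<longrightarrow> P (b + C) (Y (Suc k) \<omega>)"
  proof (rule AE_I')
    show "{\<omega> \<in> space M. \<not> (P b (Y k \<omega>) \<longrightarrow> P (b + C) (Y (Suc k) \<omega>))} \<subseteq> {\<omega> \<in> space M. \<forall>j\<le>Suc k. Y j \<omega> \<in> A j}"
      proof safe
      fix \<omega> j assume w: "\<omega> \<in> space M" "P b (Y k \<omega>)" "\<not> P (b + C) (Y (Suc k) \<omega>)" "j \<le> Suc k"
      have "\<And>j. Y j \<omega> \<in> space S" by (rule measurable_space[OF Ym w(1)])
      then show "Y j \<omega> \<in> A j" using w unfolding A_def by auto
    qed
  qed
  then show ?thesis unfolding P_def .
qed

lemma bound_induct:
  fixes Z :: "nat \<Rightarrow> ('N::finite) state"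
  assumes h: "\<forall>k. \<forall>q\<in>\<rat>. (\<forall>j\<le>n. norm (snd (Z k) j) \<le> q) \<longrightarrow> (\<forall>j\<le>n. norm (snd (Z (Suc k)) j) \<le> q + C)"
  shows "\<forall>j\<le>n. norm (snd (Z k) j) \<le> (\<Sum>j\<le>n. norm (snd (Z 0) j)) + real k * C"
proof (induction k)
  case 0
  show ?case
  proof (intro allI impI)
    fix j assume "j \<le> n"
    then show "norm (snd (Z 0) j) \<le> (\<Sum>j\<le>n. norm (snd (Z 0) j)) + real 0 * C"
      using member_le_sum[of j "{..n}" "\<lambda>j. norm (snd (Z 0) j)"] by simp
  qed
next
  case (Suc k)
  define b where "b = (\<Sum>j\<le>n. norm (snd (Z 0) j)) + real k * C"
  have IH: "\<forall>j\<le>n. norm (snd (Z k) j) \<le> b" using Suc unfolding b_def .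
  show ?case
  proof (intro allI impI)
    fix j assume j: "j \<le> n"
    show "norm (snd (Z (Suc k)) j) \<le> (\<Sum>j\<le>n. norm (snd (Z 0) j)) + real (Suc k) * C"
    proof (rule ccontr)
      assume "\<not> ?thesis"
      then have gt: "b < norm (snd (Z (Suc k)) j) - C" unfolding b_def by (simp add: algebra_simps)
      obtain q where q: "q \<in> \<rat>" "b < q" "q < norm (snd (Z (Suc k)) j) - C"
        using Rats_dense_in_real[OF gt] by blast
      have "\<forall>j\<le>n. norm (snd (Z k) j) \<le> q" using IH q(2) by force
      then have "norm (snd (Z (Suc k)) j) \<le> q + C" using h q(1) j by blast
      then show False using q(3) by simp
    qed
  qed
qed

lemma bound_all_AE:
  fixes Y :: "nat \<Rightarrow> 'w \<Rightarrow> ('N::finite) state" and \<eta> :: "(real ^ 'N) measure"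
  assumes mc: "markov_chain M (SX n) (muK \<theta>a \<theta>d n \<eta>) \<rho> Y"
    and C: "0 \<le> C" and ae: "AE y in \<eta>. norm y \<le> C"
  shows "AE \<omega> in M. \<forall>k. \<forall>j\<le>n. norm (snd (Y k \<omega>) j) \<le> (\<Sum>j\<le>n. norm (snd (Y 0 \<omega>) j)) + real k * C"
proof -
  have "AE \<omega> in M. \<forall>k. \<forall>q\<in>\<rat>. (\<forall>j\<le>n. norm (snd (Y k \<omega>) j) \<le> q) \<longrightarrow> (\<forall>j\<le>n. norm (snd (Y (Suc k) \<omega>) j) \<le> q + C)"
    unfolding AE_all_countable
  proof
    fix k
    show "AE \<omega> in M. \<forall>q\<in>\<rat>. (\<forall>j\<le>n. norm (snd (Y k \<omega>) j) \<le> q) \<longrightarrow> (\<forall>j\<le>n. norm (snd (Y (Suc k) \<omega>) j) \<le> q + C)"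
      using markov_step_AE[OF mc C ae] by (subst AE_ball_countable) (auto simp: countable_rat)
  qed
  then show ?thesis
  proof (rule eventually_mono)
    fix \<omega> assume "\<forall>k. \<forall>q\<in>\<rat>. (\<forall>j\<le>n. norm (snd (Y k \<omega>) j) \<le> q) \<longrightarrow> (\<forall>j\<le>n. norm (snd (Y (Suc k) \<omega>) j) \<le> q + C)"
    then show "\<forall>k. \<forall>j\<le>n. norm (snd (Y k \<omega>) j) \<le> (\<Sum>j\<le>n. norm (snd (Y 0 \<omega>) j)) + real k * C"
      using bound_induct[of n "\<lambda>k. Y k \<omega>" C] by blast
  qed
qed

lemma exp_half:
  fixes X :: "'w \<Rightarrow> real"
  assumes D: "distributed M lborel X (\<lambda>x. ennreal (exponential_density 1 x))"
  shows "(\<integral>\<^sup>+ \<omega>. ennreal (exp (- X \<omega>)) \<partial>M) = ennreal (1/2)"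
proof -
  have "(\<integral>\<^sup>+ \<omega>. ennreal (exp (- X \<omega>)) \<partial>M) = (\<integral>\<^sup>+ x. ennreal (exponential_density 1 x) * ennreal (exp (- x)) \<partial>lborel)"
    by (rule distributed_nn_integral[OF D, symmetric]) measurable
  also have "\<dots> = (\<integral>\<^sup>+ x. ennreal (erlang_density 0 2 x * x ^ 0) * ennreal (1/2) \<partial>lborel)"
  proof (intro nn_integral_cong)
    fix x :: real
    have ed: "exponential_density 1 x * exp (- x) = erlang_density 0 2 x * x ^ 0 * (1/2)"
      by (auto simp: exponential_density_def erlang_density_def simp flip: exp_add)
    have "ennreal (exponential_density 1 x) * ennreal (exp (- x)) = ennreal (exponential_density 1 x * exp (- x))"
      by (rule ennreal_mult[symmetric]) auto
    also have "\<dots> = ennreal (erlang_density 0 2 x * x ^ 0 * (1/2))" using ed by simp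
    also have "\<dots> = ennreal (erlang_density 0 2 x * x ^ 0) * ennreal (1/2)"
      by (rule ennreal_mult) auto
    finally show "ennreal (exponential_density 1 x) * ennreal (exp (- x)) = ennreal (erlang_density 0 2 x * x ^ 0) * ennreal (1/2)" .
  qed
  also have "\<dots> = (\<integral>\<^sup>+ x. ennreal (erlang_density 0 2 x * x ^ 0) \<partial>lborel) * ennreal (1/2)"
    by (rule nn_integral_multc) measurable
  also have "(\<integral>\<^sup>+ x. ennreal (erlang_density 0 2 x * x ^ 0) \<partial>lborel) = 1"
    using nn_integral_erlang_ith_moment[of 2 0 0] by simp
  finally show ?thesis by simp
qed

lemma chernoff:
  fixes \<gamma> :: "nat \<Rightarrow> 'w \<Rightarrow> real"
  assumes P: "prob_space M"
    and g: "\<forall>k. \<gamma> k \<in> borel_measurable M \<and> distributed M lborel (\<gamma> k) (\<lambda>x. ennreal (exponential_density 1 x))"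
    and ind: "prob_space.indep_vars M (\<lambda>_. borel) \<gamma> UNIV"
  shows "emeasure M {\<omega>\<in>space M. (\<Sum>i<Suc k. \<gamma> i \<omega>) \<le> s} \<le> ennreal (exp s) * ennreal ((1/2) ^ Suc k)"
proof -
  interpret prob_space M by (rule P)
  have gm[measurable]: "\<And>i. \<gamma> i \<in> borel_measurable M" using g by blast
  define D where "D = {\<omega>\<in>space M. (\<Sum>i<Suc k. \<gamma> i \<omega>) \<le> s}"
  have Ds: "D \<in> sets M" unfolding D_def by measurable
  have ind2: "indep_vars (\<lambda>_. borel) (\<lambda>i \<omega>. ennreal (exp (- \<gamma> i \<omega>))) {..<Suc k}"
  proof -
    have "indep_vars (\<lambda>_. borel) (\<lambda>i \<omega>. (\<lambda>x. ennreal (exp (- x))) (\<gamma> i \<omega>)) UNIV"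
      by (rule indep_vars_compose2[OF ind]) measurable
    then show ?thesis by (rule indep_vars_subset) auto
  qed
  have "emeasure M D = (\<integral>\<^sup>+ \<omega>. indicator D \<omega> \<partial>M)" using Ds by simp
  also have "\<dots> \<le> (\<integral>\<^sup>+ \<omega>. ennreal (exp s) * ennreal (\<Prod>i<Suc k. exp (- \<gamma> i \<omega>)) \<partial>M)"
  proof (intro nn_integral_mono)
    fix \<omega> assume w: "\<omega> \<in> space M"
    have e: "exp s * (\<Prod>i<Suc k. exp (- \<gamma> i \<omega>)) = exp (s - (\<Sum>i<Suc k. \<gamma> i \<omega>))"
    proof -
      have "(\<Prod>i<Suc k. exp (- \<gamma> i \<omega>)) = exp (\<Sum>i<Suc k. - \<gamma> i \<omega>)" using exp_sum[of "{..<Suc k}" "\<lambda>i. - \<gamma> i \<omega>"] by simp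
      then have "exp s * (\<Prod>i<Suc k. exp (- \<gamma> i \<omega>)) = exp (s + (\<Sum>i<Suc k. - \<gamma> i \<omega>))"
        by (simp add: exp_add)
      then show ?thesis by (simp add: sum_negf)
    qed
    show "indicator D \<omega> \<le> ennreal (exp s) * ennreal (\<Prod>i<Suc k. exp (- \<gamma> i \<omega>))"
    proof (cases "\<omega> \<in> D")
      case True
      then have "1 \<le> exp (s - (\<Sum>i<Suc k. \<gamma> i \<omega>))" unfolding D_def by simp
      then have "1 \<le> exp s * (\<Prod>i<Suc k. exp (- \<gamma> i \<omega>))" using e by simp
      then have "ennreal 1 \<le> ennreal (exp s * (\<Prod>i<Suc k. exp (- \<gamma> i \<omega>)))" by (rule ennreal_leI)
      then show ?thesis using True by (simp add: ennreal_mult prod_nonneg)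
    qed simp
  qed
  also have "\<dots> = ennreal (exp s) * (\<integral>\<^sup>+ \<omega>. ennreal (\<Prod>i<Suc k. exp (- \<gamma> i \<omega>)) \<partial>M)"
    by (rule nn_integral_cmult) measurable
  also have "(\<integral>\<^sup>+ \<omega>. ennreal (\<Prod>i<Suc k. exp (- \<gamma> i \<omega>)) \<partial>M) = (\<integral>\<^sup>+ \<omega>. (\<Prod>i<Suc k. ennreal (exp (- \<gamma> i \<omega>))) \<partial>M)"
    by (intro nn_integral_cong prod_ennreal[symmetric]) auto
  also have "\<dots> = (\<Prod>i<Suc k. \<integral>\<^sup>+ \<omega>. ennreal (exp (- \<gamma> i \<omega>)) \<partial>M)"
    by (rule indep_vars_nn_integral[OF _ ind2]) auto
  also have "\<dots> = (\<Prod>i<Suc k. ennreal (1/2))"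
    by (intro prod.cong refl exp_half) (use g in blast)
  also have "\<dots> = ennreal ((1/2) ^ Suc k)"
    using prod_ennreal[of "{..<Suc k}" "\<lambda>_. 1/2::real"] by simp
  finally show ?thesis unfolding D_def .
qed

lemma count_integral_finite:
  fixes \<gamma> :: "nat \<Rightarrow> 'w \<Rightarrow> real"
  assumes P: "prob_space M"
    and g: "\<forall>k. \<gamma> k \<in> borel_measurable M \<and> distributed M lborel (\<gamma> k) (\<lambda>x. ennreal (exponential_density 1 x))"
    and ind: "prob_space.indep_vars M (\<lambda>_. borel) \<gamma> UNIV"
  shows "(\<integral>\<^sup>+\<omega>. (\<Sum>k. indicator {\<omega>\<in>space M. (\<Sum>i<Suc k. \<gamma> i \<omega>) \<le> s} \<omega>) \<partial>M) < \<infinity>"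
proof -
  have gm[measurable]: "\<And>i. \<gamma> i \<in> borel_measurable M" using g by blast
  have Ds: "\<And>k. {\<omega>\<in>space M. (\<Sum>i<Suc k. \<gamma> i \<omega>) \<le> s} \<in> sets M" by measurable
  have sm: "summable (\<lambda>k. exp s * (1/2::real) ^ Suc k)"
    using summable_geometric[of "1/2::real"] by (intro summable_mult) (simp add: summable_mult)
  have "(\<integral>\<^sup>+\<omega>. (\<Sum>k. indicator {\<omega>\<in>space M. (\<Sum>i<Suc k. \<gamma> i \<omega>) \<le> s} \<omega>) \<partial>M)
      = (\<Sum>k. \<integral>\<^sup>+\<omega>. indicator {\<omega>\<in>space M. (\<Sum>i<Suc k. \<gamma> i \<omega>) \<le> s} \<omega> \<partial>M)"
    by (rule nn_integral_suminf) (use Ds in auto)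
  also have "\<dots> = (\<Sum>k. emeasure M {\<omega>\<in>space M. (\<Sum>i<Suc k. \<gamma> i \<omega>) \<le> s})"
    using Ds by simp
  also have "\<dots> \<le> (\<Sum>k. ennreal (exp s * (1/2) ^ Suc k))"
  proof (rule suminf_le)
    fix k show "emeasure M {\<omega>\<in>space M. (\<Sum>i<Suc k. \<gamma> i \<omega>) \<le> s} \<le> ennreal (exp s * (1/2) ^ Suc k)"
    proof -
      have "ennreal (exp s * (1/2) ^ Suc k) = ennreal (exp s) * ennreal ((1/2) ^ Suc k)"
        by (rule ennreal_mult) auto
      then show ?thesis using chernoff[OF P g ind, of k s] by simp
    qed
  qed auto
  also have "\<dots> = ennreal (\<Sum>k. exp s * (1/2) ^ Suc k)"
    by (rule suminf_ennreal2[OF _ sm]) simp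
  also have "\<dots> < \<infinity>" by simp
  finally show ?thesis .
qed

lemma crate_bounds:
  assumes "\<theta>a > 0" "\<theta>d > 0" "n > 0"
  shows "0 < crate \<theta>a \<theta>d n x" "crate \<theta>a \<theta>d n x \<le> (\<theta>a + \<theta>d) * real n"
proof -
  have k: "real (psiCard n (fst x)) \<le> real n" using psiCard_le by simp
  have "0 < min \<theta>a \<theta>d * real n" using assms by simp
  also have "min \<theta>a \<theta>d * real n \<le> crate \<theta>a \<theta>d n x"
  proof -
    have "min \<theta>a \<theta>d * real n = min \<theta>a \<theta>d * real (psiCard n (fst x)) + min \<theta>a \<theta>d * (real n - real (psiCard n (fst x)))"
      by (simp add: algebra_simps)
    also have "\<dots> \<le> crate \<theta>a \<theta>d n x" unfolding crate_def using k
      by (intro add_mono mult_right_mono) auto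
    finally show ?thesis .
  qed
  finally show "0 < crate \<theta>a \<theta>d n x" .
  have "crate \<theta>a \<theta>d n x \<le> (\<theta>a + \<theta>d) * real (psiCard n (fst x)) + (\<theta>a + \<theta>d) * (real n - real (psiCard n (fst x)))"
    unfolding crate_def using k assms by (intro add_mono mult_right_mono) auto
  also have "\<dots> = (\<theta>a + \<theta>d) * real n" by (simp add: algebra_simps)
  finally show "crate \<theta>a \<theta>d n x \<le> (\<theta>a + \<theta>d) * real n" .
qed

lemma L_count:
  fixes c :: "('N::finite) state \<Rightarrow> real"
  assumes c0: "\<And>x. 0 < c x" and c1: "\<And>x. c x \<le> cmax" and g0: "\<forall>i. 0 \<le> \<gamma> i \<omega>"
    and k: "k < (LEAST k. t < jump_time \<gamma> c Y (Suc k) \<omega>)"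
  shows "(\<Sum>i<Suc k. \<gamma> i \<omega>) \<le> t * cmax"
proof -
  have "\<not> t < jump_time \<gamma> c Y (Suc k) \<omega>" using not_less_Least[OF k] .
  then have jt: "(\<Sum>i<Suc k. \<gamma> i \<omega> / c (Y i \<omega>)) \<le> t" unfolding jump_time_def by simp
  have cm: "0 < cmax" using c0 c1 by (meson less_le_trans)
  have "(\<Sum>i<Suc k. \<gamma> i \<omega>) / cmax = (\<Sum>i<Suc k. \<gamma> i \<omega> / cmax)" by (rule sum_divide_distrib)
  also have "\<dots> \<le> (\<Sum>i<Suc k. \<gamma> i \<omega> / c (Y i \<omega>))"
  proof (intro sum_mono)
    fix i show "\<gamma> i \<omega> / cmax \<le> \<gamma> i \<omega> / c (Y i \<omega>)"
      using c0[of "Y i \<omega>"] c1[of "Y i \<omega>"] g0 by (intro divide_left_mono) auto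
  qed
  also have "\<dots> \<le> t" by (rule jt)
  finally show ?thesis using cm by (simp add: divide_le_eq)
qed

lemma L_ennreal:
  fixes c :: "('N::finite) state \<Rightarrow> real"
  assumes c0: "\<And>x. 0 < c x" and c1: "\<And>x. c x \<le> cmax" and g0: "\<forall>i. 0 \<le> \<gamma> i \<omega>" and w: "\<omega> \<in> space M"
  shows "ennreal (real (LEAST k. t < jump_time \<gamma> c Y (Suc k) \<omega>))
     \<le> (\<Sum>k. indicator {\<omega>\<in>space M. (\<Sum>i<Suc k. \<gamma> i \<omega>) \<le> t * cmax} \<omega>)"
proof -
  define L where "L = (LEAST k. t < jump_time \<gamma> c Y (Suc k) \<omega>)"
  define f where "f = (\<lambda>k. indicator {\<omega>\<in>space M. (\<Sum>i<Suc k. \<gamma> i \<omega>) \<le> t * cmax} \<omega> :: ennreal)"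
  have "\<And>k. k \<in> {..<L} \<Longrightarrow> f k = 1"
  proof -
    fix k assume "k \<in> {..<L}"
    then have "(\<Sum>i<Suc k. \<gamma> i \<omega>) \<le> t * cmax"
      using L_count[where c=c and cmax=cmax and \<gamma>=\<gamma> and \<omega>=\<omega> and t=t and Y=Y and k=k] c0 c1 g0
      unfolding L_def by blast
    then show "f k = 1" using w unfolding f_def by simp
  qed
  then have "(\<Sum>k<L. f k) = (\<Sum>k<L. 1)" by (rule sum.cong[OF refl])
  then have "ennreal (real L) = (\<Sum>k<L. f k)" by (simp add: ennreal_of_nat_eq_real_of_nat)
  also have "\<dots> \<le> suminf f"
    by (rule sum_le_suminf) auto
  finally show ?thesis unfolding L_def f_def .
qed

theorem proposition6:
  fixes \<theta>a \<theta>d R :: real and n :: nat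
    and \<eta> :: "(real ^ 'N) measure" and \<rho> :: "('N::finite) state measure"
    and M :: "'w measure" and Y :: "nat \<Rightarrow> 'w \<Rightarrow> ('N::finite) state" and \<gamma> :: "nat \<Rightarrow> 'w \<Rightarrow> real"
  assumes "\<theta>a > 0" and "\<theta>d > 0" and "n > 0"
    and "prob_space \<eta>" and "sets \<eta> = sets borel" and "integrable \<eta> (\<lambda>x. x)"
    and "R > 0" and "AE x in \<eta>. \<forall>j. \<bar>x $ j\<bar> \<le> R"
    and "prob_space \<rho>" and "sets \<rho> = sets (SX n)"
    and "\<forall>i\<le>n. integrable \<rho> (\<lambda>x. snd x i)"
    and "prob_space M"
    and "markov_chain M (SX n) (muK \<theta>a \<theta>d n \<eta>) \<rho> Y"
    and "\<forall>k. \<gamma> k \<in> borel_measurable M \<and> distributed M lborel (\<gamma> k) (\<lambda>x. ennreal (exponential_density 1 x))"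
    and "prob_space.indep_vars M (\<lambda>_. borel) \<gamma> UNIV"
    and "prob_space.indep_set M
           {(\<lambda>\<omega> k. Y k \<omega>) -` A \<inter> space M | A. A \<in> sets (PiM UNIV (\<lambda>_. SX n))}
           {(\<lambda>\<omega> k. \<gamma> k \<omega>) -` A \<inter> space M | A. A \<in> sets (PiM UNIV (\<lambda>_. (borel :: real measure)))}"
  shows "\<forall>i\<le>n. \<forall>t\<ge>0. integrable M (\<lambda>\<omega>. snd (jump_process \<gamma> (crate \<theta>a \<theta>d n) Y t \<omega>) i)"
proof (intro allI impI)
  fix i :: nat and t :: real
  assume i: "i \<le> n" and t: "0 \<le> t"
  interpret P: prob_space M by fact
  note mc = assms(13)
  define C where "C = real CARD('N) * R"
  have C0: "0 \<le> C" unfolding C_def using assms(7) by simp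
  have aeeta: "AE y in \<eta>. norm y \<le> C"
    using assms(8)
  proof (rule eventually_mono)
    fix y :: "real ^ 'N" assume "\<forall>j. \<bar>y $ j\<bar> \<le> R"
    then have "(\<Sum>j\<in>UNIV. \<bar>y $ j\<bar>) \<le> (\<Sum>j\<in>(UNIV::'N set). R)" by (intro sum_mono) auto
    then show "norm y \<le> C" unfolding C_def using norm_le_l1_cart[of y] by simp
  qed
  define c where "c = (crate \<theta>a \<theta>d n :: 'N state \<Rightarrow> real)"
  define cmax where "cmax = (\<theta>a + \<theta>d) * real n"
  have c0: "\<And>x. 0 < c x" unfolding c_def using crate_bounds[OF assms(1-3)] by blast
  have c1: "\<And>x. c x \<le> cmax" unfolding c_def cmax_def using crate_bounds[OF assms(1-3)] by blast
  define s where "s = t * cmax"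
  define L where "L = (\<lambda>\<omega>. LEAST k. t < jump_time \<gamma> c Y (Suc k) \<omega>)"
  define B0 where "B0 = (\<lambda>\<omega>. \<Sum>j\<le>n. norm (snd (Y 0 \<omega>) j))"
  define S where "S = (\<lambda>\<omega>. (\<Sum>k. indicator {\<omega>\<in>space M. (\<Sum>i<Suc k. \<gamma> i \<omega>) \<le> s} \<omega>) :: ennreal)"
  have f_eq: "(\<lambda>\<omega>. snd (jump_process \<gamma> (crate \<theta>a \<theta>d n) Y t \<omega>) i) = (\<lambda>\<omega>. snd (Y (L \<omega>) \<omega>) i)"
    unfolding jump_process_def L_def c_def ..
  have Ym: "\<And>k. Y k \<in> measurable M (SX n)" using mc unfolding markov_chain_def by blast
  have gm[measurable]: "\<And>k. \<gamma> k \<in> borel_measurable M" using assms(14) by blast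
  have cYm[measurable]: "\<And>k. (\<lambda>\<omega>. c (Y k \<omega>)) \<in> borel_measurable M"
    unfolding c_def by (rule measurable_compose[OF Ym meas_crate])
  have jtm[measurable]: "\<And>k. jump_time \<gamma> c Y k \<in> borel_measurable M"
    unfolding jump_time_def[abs_def] by measurable
  have Lm: "L \<in> measurable M (count_space UNIV)"
    unfolding L_def by measurable
  have fm: "(\<lambda>\<omega>. snd (Y (L \<omega>) \<omega>) i) \<in> borel_measurable M"
    by (rule measurable_compose_countable'[OF _ Lm]) (auto intro: measurable_compose[OF Ym meas_snd[OF i]])
  have Bnd: "AE \<omega> in M. \<forall>k. \<forall>j\<le>n. norm (snd (Y k \<omega>) j) \<le> B0 \<omega> + real k * C"
    unfolding B0_def by (rule bound_all_AE[OF mc C0 aeeta])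
  have Gpos: "AE \<omega> in M. \<forall>k. 0 \<le> \<gamma> k \<omega>"
    unfolding AE_all_countable
  proof
    fix k
    have D: "distributed M lborel (\<gamma> k) (\<lambda>x. ennreal (exponential_density 1 x))" using assms(14) by blast
    have "\<P>(x in M. \<gamma> k x \<le> 0) = 1 - exp (- 0 * 1)"
      by (rule P.exponential_distributedD_le[OF D]) auto
    then have "\<P>(x in M. \<gamma> k x \<le> 0) = 0" by simp
    moreover have "{x \<in> space M. \<gamma> k x \<le> 0} \<in> sets M" by measurable
    ultimately have "AE x in M. \<not> \<gamma> k x \<le> 0" using P.prob_Collect_eq_0[of "\<lambda>x. \<gamma> k x \<le> 0"] by blast
    then show "AE x in M. 0 \<le> \<gamma> k x" by (rule eventually_mono) simp
  qed
  have ptw: "AE \<omega> in M. ennreal (norm (snd (Y (L \<omega>) \<omega>) i)) \<le> ennreal (B0 \<omega>) + ennreal C * S \<omega>"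
    using Bnd Gpos AE_space
  proof (eventually_elim)
    case (elim \<omega>)
    have w: "\<omega> \<in> space M" using elim(3) .
    have Lle: "ennreal (real (L \<omega>)) \<le> S \<omega>" unfolding L_def S_def s_def by (rule L_ennreal[where c=c and cmax=cmax and \<gamma>=\<gamma> and \<omega>=\<omega> and M=M and t=t and Y=Y, OF c0 c1 elim(2) w])
    have nb: "norm (snd (Y (L \<omega>) \<omega>) i) \<le> B0 \<omega> + real (L \<omega>) * C" using elim(1) i by blast
    have B0nn: "0 \<le> B0 \<omega>" unfolding B0_def by (simp add: sum_nonneg)
    have "ennreal (norm (snd (Y (L \<omega>) \<omega>) i)) \<le> ennreal (B0 \<omega> + real (L \<omega>) * C)" using nb by (rule ennreal_leI)
    also have "\<dots> = ennreal (B0 \<omega>) + ennreal (real (L \<omega>) * C)" using B0nn C0 by (intro ennreal_plus) auto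
    also have "ennreal (real (L \<omega>) * C) = ennreal C * ennreal (real (L \<omega>))"
      using C0 by (subst ennreal_mult) (auto simp: mult.commute)
    also have "ennreal (B0 \<omega>) + ennreal C * ennreal (real (L \<omega>)) \<le> ennreal (B0 \<omega>) + ennreal C * S \<omega>"
      using Lle by (intro add_left_mono mult_left_mono) auto
    finally show ?case .
  qed
  have Sm: "S \<in> borel_measurable M" unfolding S_def by measurable
  have Sfin: "(\<integral>\<^sup>+\<omega>. S \<omega> \<partial>M) < \<infinity>"
    unfolding S_def s_def by (rule count_integral_finite[OF assms(12) assms(14) assms(15)])
  have gsm: "(\<lambda>x. \<Sum>j\<le>n. norm (snd x j)) \<in> borel_measurable (SX n)"
  proof (intro borel_measurable_sum)
    fix j assume "j \<in> {..n}"
    then have [measurable]: "(\<lambda>x. snd x j) \<in> borel_measurable (SX n)" by (intro meas_snd) simp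
    show "(\<lambda>x. norm (snd x j)) \<in> borel_measurable (SX n)" by measurable
  qed
  have B0m: "B0 \<in> borel_measurable M" unfolding B0_def by (rule measurable_compose[OF Ym gsm])
  have B0fin: "(\<integral>\<^sup>+\<omega>. ennreal (B0 \<omega>) \<partial>M) < \<infinity>"
  proof -
    have dis: "distr M (SX n) (Y 0) = \<rho>" using mc unfolding markov_chain_def by blast
    have "(\<integral>\<^sup>+\<omega>. ennreal (B0 \<omega>) \<partial>M) = (\<integral>\<^sup>+x. ennreal (\<Sum>j\<le>n. norm (snd x j)) \<partial>distr M (SX n) (Y 0))"
      unfolding B0_def by (rule nn_integral_distr[symmetric, OF Ym]) (use gsm in measurable)
    also have "\<dots> = (\<integral>\<^sup>+x. ennreal (norm (\<Sum>j\<le>n. norm (snd x j))) \<partial>\<rho>)"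
      unfolding dis by (intro nn_integral_cong) (simp add: sum_nonneg)
    also have "\<dots> < \<infinity>"
    proof -
      have "integrable \<rho> (\<lambda>x. \<Sum>j\<le>n. norm (snd x j))"
      proof (rule Bochner_Integration.integrable_sum[where I="{..n}" and f="\<lambda>j (x::'N state). norm (snd x j)"])
        fix j assume "j \<in> {..n}"
        then have "integrable \<rho> (\<lambda>x. snd x j)" using assms(11) by simp
        then show "integrable \<rho> (\<lambda>x. norm (snd x j))" by (rule integrable_norm)
      qed
      then show ?thesis unfolding integrable_iff_bounded by blast
    qed
    finally show ?thesis .
  qed
  have "(\<integral>\<^sup>+\<omega>. ennreal (norm (snd (Y (L \<omega>) \<omega>) i)) \<partial>M) \<le> (\<integral>\<^sup>+\<omega>. ennreal (B0 \<omega>) + ennreal C * S \<omega> \<partial>M)"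
    by (rule nn_integral_mono_AE[OF ptw])
  also have "\<dots> = (\<integral>\<^sup>+\<omega>. ennreal (B0 \<omega>) \<partial>M) + (\<integral>\<^sup>+\<omega>. ennreal C * S \<omega> \<partial>M)"
    using B0m Sm by (intro nn_integral_add) auto
  also have "(\<integral>\<^sup>+\<omega>. ennreal C * S \<omega> \<partial>M) = ennreal C * (\<integral>\<^sup>+\<omega>. S \<omega> \<partial>M)"
    using Sm by (rule nn_integral_cmult)
  also have "(\<integral>\<^sup>+\<omega>. ennreal (B0 \<omega>) \<partial>M) + ennreal C * (\<integral>\<^sup>+\<omega>. S \<omega> \<partial>M) < \<infinity>"
    using B0fin Sfin by (simp add: ennreal_mult_less_top)
  finally have fin: "(\<integral>\<^sup>+\<omega>. ennreal (norm (snd (Y (L \<omega>) \<omega>) i)) \<partial>M) < \<infinity>" .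
  have "integrable M (\<lambda>\<omega>. snd (Y (L \<omega>) \<omega>) i)"
    unfolding integrable_iff_bounded using fm fin by blast
  then show "integrable M (\<lambda>\<omega>. snd (jump_process \<gamma> (crate \<theta>a \<theta>d n) Y t \<omega>) i)"
    unfolding f_eq .
qed

end
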